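(* Let $(A_i,\omega_i)$, $i=1,2$, be associative baric algebras over $K$. Then the following are equivalent: (i) $A_1\bowtie A_2$ is associative; (ii) $A_1\bowtie A_2$ is left alternative; (iii) $A_1\bowtie A_2$ is right alternative.
   Context: A baric algebra over a field $K$ is a pair $(A,\omega)$ where $A$ is a (not necessarily associative) $K$-algebra and $\omega:A\to K$ is a nonzero $K$-algebra homomorphism. For baric algebras $(A_1,\omega_1),(A_2,\omega_2)$, $A_1\bowtie A_2$ denotes the vector space $A_1\oplus A_2$ with product $(a_1,a_2)(b_1,b_2)=(a_1b_1+\omega_2(b_2)a_1,\ a_2b_2+\omega_1(b_1)a_2)$. With associator $(x,y,z)=(xy)z-x(yz)$, an algebra is left alternative if $(x,x,y)=0$ for all $x,y$, and right alternative if $(x,y,y)=0$ for all $x,y$. *)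

theory Defs
  imports Complex_Main "HOL-Library.Product_Plus"
begin

definition K_algebra :: "('k::field \<Rightarrow> 'a::ab_group_add \<Rightarrow> 'a) \<Rightarrow> ('a \<Rightarrow> 'a \<Rightarrow> 'a) \<Rightarrow> bool" where
  "K_algebra scale mult \<longleftrightarrow>
     Vector_Spaces.vector_space scale \<and>
     (\<forall>x y z. mult (x + y) z = mult x z + mult y z) \<and>
     (\<forall>x y z. mult x (y + z) = mult x y + mult x z) \<and>
     (\<forall>c x y. mult (scale c x) y = scale c (mult x y)) \<and>
     (\<forall>c x y. mult x (scale c y) = scale c (mult x y))"

definition baric_algebra ::
  "('k::field \<Rightarrow> 'a::ab_group_add \<Rightarrow> 'a) \<Rightarrow> ('a \<Rightarrow> 'a \<Rightarrow> 'a) \<Rightarrow> ('a \<Rightarrow> 'k) \<Rightarrow> bool" where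
  "baric_algebra scale mult \<omega> \<longleftrightarrow>
     K_algebra scale mult \<and>
     Vector_Spaces.linear scale (*) \<omega> \<and>
     (\<forall>x y. \<omega> (mult x y) = \<omega> x * \<omega> y) \<and>
     \<omega> \<noteq> (\<lambda>_. 0)"

definition associator :: "('a::ab_group_add \<Rightarrow> 'a \<Rightarrow> 'a) \<Rightarrow> 'a \<Rightarrow> 'a \<Rightarrow> 'a \<Rightarrow> 'a" where
  "associator mult x y z = mult (mult x y) z - mult x (mult y z)"

definition associative_alg :: "('a::ab_group_add \<Rightarrow> 'a \<Rightarrow> 'a) \<Rightarrow> bool" where
  "associative_alg mult \<longleftrightarrow> (\<forall>x y z. associator mult x y z = 0)"

definition left_alternative :: "('a::ab_group_add \<Rightarrow> 'a \<Rightarrow> 'a) \<Rightarrow> bool" where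
  "left_alternative mult \<longleftrightarrow> (\<forall>x y. associator mult x x y = 0)"

definition right_alternative :: "('a::ab_group_add \<Rightarrow> 'a \<Rightarrow> 'a) \<Rightarrow> bool" where
  "right_alternative mult \<longleftrightarrow> (\<forall>x y. associator mult x y y = 0)"

text \<open>The product of A1 \<bowtie> A2 on the vector space A1 \<oplus> A2 (= 'a \<times> 'b, componentwise structure).\<close>
definition bowtie_mult ::
  "('k::field \<Rightarrow> 'a::ab_group_add \<Rightarrow> 'a) \<Rightarrow> ('a \<Rightarrow> 'a \<Rightarrow> 'a) \<Rightarrow> ('a \<Rightarrow> 'k) \<Rightarrow>
   ('k \<Rightarrow> 'b::ab_group_add \<Rightarrow> 'b) \<Rightarrow> ('b \<Rightarrow> 'b \<Rightarrow> 'b) \<Rightarrow> ('b \<Rightarrow> 'k) \<Rightarrow>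
   'a \<times> 'b \<Rightarrow> 'a \<times> 'b \<Rightarrow> 'a \<times> 'b" where
  "bowtie_mult scale1 mult1 \<omega>1 scale2 mult2 \<omega>2 x y =
     (mult1 (fst x) (fst y) + scale1 (\<omega>2 (snd y)) (fst x),
      mult2 (snd x) (snd y) + scale2 (\<omega>1 (fst y)) (snd x))"

end

theory Submission
  imports Defs
begin

lemma assoc_components:
  assumes b1: "baric_algebra scale1 mult1 \<omega>1" and b2: "baric_algebra scale2 mult2 \<omega>2"
    and as1: "associative_alg mult1" and as2: "associative_alg mult2"
  shows "associator (bowtie_mult scale1 mult1 \<omega>1 scale2 mult2 \<omega>2) x y z =
    (scale1 (\<omega>2 (snd y)) (mult1 (fst x) (fst z) - scale1 (\<omega>1 (fst z)) (fst x)),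
     scale2 (\<omega>1 (fst y)) (mult2 (snd x) (snd z) - scale2 (\<omega>2 (snd z)) (snd x)))"
proof -
  from b1 have v1: "Vector_Spaces.vector_space scale1" and l1: "Vector_Spaces.linear scale1 (*) \<omega>1"
    and m1: "\<forall>x y. \<omega>1 (mult1 x y) = \<omega>1 x * \<omega>1 y"
    and a1: "\<forall>x y z. mult1 (x + y) z = mult1 x z + mult1 y z"
      "\<forall>x y z. mult1 x (y + z) = mult1 x y + mult1 x z"
      "\<forall>c x y. mult1 (scale1 c x) y = scale1 c (mult1 x y)"
      "\<forall>c x y. mult1 x (scale1 c y) = scale1 c (mult1 x y)"
    by (auto simp: baric_algebra_def K_algebra_def)
  from b2 have v2: "Vector_Spaces.vector_space scale2" and l2: "Vector_Spaces.linear scale2 (*) \<omega>2"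
    and m2: "\<forall>x y. \<omega>2 (mult2 x y) = \<omega>2 x * \<omega>2 y"
    and a2: "\<forall>x y z. mult2 (x + y) z = mult2 x z + mult2 y z"
      "\<forall>x y z. mult2 x (y + z) = mult2 x y + mult2 x z"
      "\<forall>c x y. mult2 (scale2 c x) y = scale2 c (mult2 x y)"
      "\<forall>c x y. mult2 x (scale2 c y) = scale2 c (mult2 x y)"
    by (auto simp: baric_algebra_def K_algebra_def)
  interpret v1: Vector_Spaces.vector_space scale1 by (rule v1)
  interpret v2: Vector_Spaces.vector_space scale2 by (rule v2)
  interpret l1: Vector_Spaces.linear scale1 "(*)" \<omega>1 by (rule l1)
  interpret l2: Vector_Spaces.linear scale2 "(*)" \<omega>2 by (rule l2)
  obtain a1' a2' where x: "x = (a1', a2')" by (cases x)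
  obtain b1' b2' where y: "y = (b1', b2')" by (cases y)
  obtain c1' c2' where z: "z = (c1', c2')" by (cases z)
  have aa1: "mult1 (mult1 p q) r = mult1 p (mult1 q r)" for p q r
    using as1 unfolding associative_alg_def associator_def by (metis eq_iff_diff_eq_0)
  have aa2: "mult2 (mult2 p q) r = mult2 p (mult2 q r)" for p q r
    using as2 unfolding associative_alg_def associator_def by (metis eq_iff_diff_eq_0)
  show ?thesis
    unfolding x y z associator_def bowtie_mult_def
    by (simp add: aa1 aa2 a1 a2 m1 m2 l1.add l2.add l1.scale l2.scale v1.scale_right_diff_distrib
        v2.scale_right_diff_distrib v1.scale_right_distrib v2.scale_right_distrib
        v1.scale_left_distrib v2.scale_left_distrib algebra_simps)
qed

theorem proposition6p2:
  fixes scale1 :: "'k::field \<Rightarrow> 'a::ab_group_add \<Rightarrow> 'a" and mult1 :: "'a \<Rightarrow> 'a \<Rightarrow> 'a"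
    and \<omega>1 :: "'a \<Rightarrow> 'k"
    and scale2 :: "'k \<Rightarrow> 'b::ab_group_add \<Rightarrow> 'b" and mult2 :: "'b \<Rightarrow> 'b \<Rightarrow> 'b"
    and \<omega>2 :: "'b \<Rightarrow> 'k"
  assumes "baric_algebra scale1 mult1 \<omega>1" and "associative_alg mult1"
    and "baric_algebra scale2 mult2 \<omega>2" and "associative_alg mult2"
  shows "(associative_alg (bowtie_mult scale1 mult1 \<omega>1 scale2 mult2 \<omega>2)
            \<longleftrightarrow> left_alternative (bowtie_mult scale1 mult1 \<omega>1 scale2 mult2 \<omega>2))
       \<and> (left_alternative (bowtie_mult scale1 mult1 \<omega>1 scale2 mult2 \<omega>2)
            \<longleftrightarrow> right_alternative (bowtie_mult scale1 mult1 \<omega>1 scale2 mult2 \<omega>2))"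
proof -
  note AC = assoc_components[OF assms(1,3,2,4)]
  interpret v1: Vector_Spaces.vector_space scale1
    using assms(1) by (simp add: baric_algebra_def K_algebra_def)
  interpret v2: Vector_Spaces.vector_space scale2
    using assms(3) by (simp add: baric_algebra_def K_algebra_def)
  obtain u where u: "\<omega>1 u \<noteq> 0" using assms(1) unfolding baric_algebra_def by fastforce
  obtain v where v: "\<omega>2 v \<noteq> 0" using assms(3) unfolding baric_algebra_def by fastforce
  define P where "P \<longleftrightarrow> (\<forall>a c. mult1 a c = scale1 (\<omega>1 c) a) \<and> (\<forall>a c. mult2 a c = scale2 (\<omega>2 c) a)"
  have PA: "associative_alg (bowtie_mult scale1 mult1 \<omega>1 scale2 mult2 \<omega>2)" if P
    using that unfolding P_def associative_alg_def AC by (simp add: zero_prod_def)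
  have LP: P if "left_alternative (bowtie_mult scale1 mult1 \<omega>1 scale2 mult2 \<omega>2)"
  proof -
    have "mult1 a c = scale1 (\<omega>1 c) a" for a c
      using that[unfolded left_alternative_def AC, rule_format, of "(a, v)" "(c, 0)"] v by (simp add: zero_prod_def)
    moreover have "mult2 a c = scale2 (\<omega>2 c) a" for a c
      using that[unfolded left_alternative_def AC, rule_format, of "(u, a)" "(0, c)"] u by (simp add: zero_prod_def)
    ultimately show P unfolding P_def by blast
  qed
  have RP: P if "right_alternative (bowtie_mult scale1 mult1 \<omega>1 scale2 mult2 \<omega>2)"
  proof -
    have "mult1 a c = scale1 (\<omega>1 c) a" for a c
      using that[unfolded right_alternative_def AC, rule_format, of "(c, v)" "(a, 0)"] v by (simp add: zero_prod_def)
    moreover have "mult2 a c = scale2 (\<omega>2 c) a" for a c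
      using that[unfolded right_alternative_def AC, rule_format, of "(u, c)" "(0, a)"] u by (simp add: zero_prod_def)
    ultimately show P unfolding P_def by blast
  qed
  have AL: "left_alternative (bowtie_mult scale1 mult1 \<omega>1 scale2 mult2 \<omega>2)"
    if "associative_alg (bowtie_mult scale1 mult1 \<omega>1 scale2 mult2 \<omega>2)"
    using that unfolding associative_alg_def left_alternative_def by blast
  have AR: "right_alternative (bowtie_mult scale1 mult1 \<omega>1 scale2 mult2 \<omega>2)"
    if "associative_alg (bowtie_mult scale1 mult1 \<omega>1 scale2 mult2 \<omega>2)"
    using that unfolding associative_alg_def right_alternative_def by blast
  show ?thesis using PA LP RP AL AR by blast
qed

end
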